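(* Assume the root datum is $X$-regular and $\phi$ is an enhancer. Let $\lambda,\lambda'\in X^+$, $\Lambda_\lambda=\{\lambda-\nu':\nu\in\mathbb N[I]\}$ and $V_{\lambda'}=\{\nu'-\lambda':\nu\in\mathbb N[I]\}$, and for $\zeta=\lambda-\nu'\in\Lambda_\lambda$ set $p(\zeta)=p(\nu)$. Then there is a function $\varkappa=\varkappa_{\lambda,\lambda'}:\Lambda_\lambda\times V_{\lambda'}\to\mathbb Z$ such that, modulo $4$ and for all $i\in I$, $\zeta\in\Lambda_\lambda$, $\zeta'\in V_{\lambda'}$ (with $\zeta-i'\in\Lambda_\lambda$, $\zeta'+i'\in V_{\lambda'}$ automatically): (1) $\varkappa(\zeta-i',\zeta')\equiv\varkappa(\zeta,\zeta')-\phi(i,\zeta')$; (2) $\varkappa(\zeta,\zeta'+i')\equiv\varkappa(\zeta,\zeta')+\phi(i,\zeta)+2d_i+\langle\tilde i,\zeta+\zeta'\rangle+2p(\zeta)p(i)$; (3) $\varkappa(\lambda,-\lambda')\equiv0$.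
   Context: Setup. $I$ is a finite set with a partition $I=I_{\bar 0}\sqcup I_{\bar 1}$, $I_{\bar 1}\neq\emptyset$; $p(i)=0$ for $i\in I_{\bar0}$ and $p(i)=1$ for $i\in I_{\bar1}$. There is a symmetric $\mathbb Z$-bilinear form $\nu\cdot\nu'$ on $\mathbb Z[I]$ with $d_i:=\frac{i\cdot i}{2}\in\mathbb Z_{>0}$, $a_{ij}:=\frac{2\,i\cdot j}{i\cdot i}\in\mathbb Z_{\le 0}$ for $i\neq j$, $a_{ij}\in2\mathbb Z$ whenever $i\in I_{\bar1}$, and $d_i\equiv p(i)\pmod 2$ (hence $i\cdot j\in2\mathbb Z$). A root datum is fixed: free abelian groups $X,Y$ of finite rank with a perfect pairing $\langle\cdot,\cdot\rangle:Y\times X\to\mathbb Z$, a map $I\to Y$, $i\mapsto i$, with linearly independent image, and a map $I\to X$, $i\mapsto i'$, with $\langle i,j'\rangle=\frac{2\,i\cdot j}{i\cdot i}$. $X$-regular means the image of $i\mapsto i'$ is linearly independent. For $\nu=\sum\nu_i i\in\mathbb Z[I]$: $p(\nu)=\sum\nu_ip(i)\in\mathbb Z/2$ (identified with $\{0,1\}$ in exponents), $\tilde\nu=\sum d_i\nu_ii\in Y$, $\nu'=\sum\nu_ii'\in X$; $\tilde i=d_ii$. $X^+=\{\lambda\in X:\langle i,\lambda\rangle\ge0\ \forall i\}$. An enhancer is a function $\phi:\mathbb Z[I]\times X\to\mathbb Z$ such that, with $\equiv$ denoting congruence mod 4: (a) $\phi(\nu,\lambda+\mu')\equiv\phi(\nu,\mu')+\phi(\nu,\lambda)$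 and $\phi(\nu+\mu,\lambda)\equiv\phi(\nu,\lambda)+\phi(\mu,\lambda)$ for $\nu,\mu\in\mathbb Z[I]$, $\lambda\in X$; (b) $\phi(i,j')\in2\mathbb Z$ for $i\neq j$; (c) $\phi(i,j')-\phi(j,i')\equiv i\cdot j+2p(i)p(j)$ for $i\ne j$ and $\phi(i,i')\equiv d_i$. *)

theory Defs
  imports "HOL-Analysis.Finite_Cartesian_Product"
begin

text \<open>Elements of Z[I] are integer functions on 'i supported in I; the basis
  element i is the indicator function basis i.  X and Y are free abelian groups of
  finite rank, realised as int ^ 'n with the standard (perfect) pairing.\<close>

definition ZI :: "'i set \<Rightarrow> ('i \<Rightarrow> int) set" where
  "ZI I = {\<nu>. \<forall>k. k \<notin> I \<longrightarrow> \<nu> k = 0}"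

definition NI :: "'i set \<Rightarrow> ('i \<Rightarrow> int) set" where
  "NI I = {\<nu> \<in> ZI I. \<forall>k. 0 \<le> \<nu> k}"

definition basis :: "'i \<Rightarrow> 'i \<Rightarrow> int" where
  "basis i = (\<lambda>k. if k = i then 1 else 0)"

definition pairing :: "int ^ 'n \<Rightarrow> int ^ 'n \<Rightarrow> int" where
  "pairing y x = (\<Sum>k\<in>UNIV. y $ k * x $ k)"

definition par :: "'i set \<Rightarrow> 'i \<Rightarrow> int" where
  "par I1 i = (if i \<in> I1 then 1 else 0)"

definition parZ :: "'i set \<Rightarrow> 'i set \<Rightarrow> ('i \<Rightarrow> int) \<Rightarrow> int" where
  "parZ I I1 \<nu> = (\<Sum>k\<in>I. \<nu> k * par I1 k) mod 2"

definition dd :: "('i \<Rightarrow> 'i \<Rightarrow> int) \<Rightarrow> 'i \<Rightarrow> int" where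
  "dd dot i = dot i i div 2"

definition cartan_datum :: "'i set \<Rightarrow> 'i set \<Rightarrow> ('i \<Rightarrow> 'i \<Rightarrow> int) \<Rightarrow> bool" where
  "cartan_datum I I1 dot \<longleftrightarrow>
     finite I \<and> I1 \<subseteq> I \<and> I1 \<noteq> {} \<and>
     (\<forall>i\<in>I. \<forall>j\<in>I. dot i j = dot j i) \<and>
     (\<forall>i\<in>I. even (dot i i) \<and> dot i i > 0) \<and>
     (\<forall>i\<in>I. \<forall>j\<in>I. i \<noteq> j \<longrightarrow> dot i i dvd 2 * dot i j \<and> dot i j \<le> 0) \<and>
     (\<forall>i\<in>I1. \<forall>j\<in>I. i \<noteq> j \<longrightarrow> even (2 * dot i j div dot i i)) \<and>
     (\<forall>i\<in>I. dd dot i mod 2 = par I1 i)"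

definition lin_indep_fam :: "'i set \<Rightarrow> ('i \<Rightarrow> int ^ 'n) \<Rightarrow> bool" where
  "lin_indep_fam I v \<longleftrightarrow>
     (\<forall>c. (\<Sum>i\<in>I. c i *s v i) = 0 \<longrightarrow> (\<forall>i\<in>I. c i = 0))"

text \<open>Root datum: i \<mapsto> i in Y (linearly independent), i \<mapsto> i' in X,
  with <i, j'> = 2 i.j / i.i.\<close>
definition root_datum :: "'i set \<Rightarrow> ('i \<Rightarrow> 'i \<Rightarrow> int) \<Rightarrow> ('i \<Rightarrow> int ^ 'n) \<Rightarrow> ('i \<Rightarrow> int ^ 'n) \<Rightarrow> bool" where
  "root_datum I dot iY iX \<longleftrightarrow>
     lin_indep_fam I iY \<and>
     (\<forall>i\<in>I. \<forall>j\<in>I. pairing (iY i) (iX j) * dot i i = 2 * dot i j)"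

definition X_regular :: "'i set \<Rightarrow> ('i \<Rightarrow> int ^ 'n) \<Rightarrow> bool" where
  "X_regular I iX \<longleftrightarrow> lin_indep_fam I iX"

definition primeX :: "'i set \<Rightarrow> ('i \<Rightarrow> int ^ 'n) \<Rightarrow> ('i \<Rightarrow> int) \<Rightarrow> int ^ 'n" where
  "primeX I iX \<nu> = (\<Sum>i\<in>I. \<nu> i *s iX i)"

definition tildeY :: "('i \<Rightarrow> 'i \<Rightarrow> int) \<Rightarrow> ('i \<Rightarrow> int ^ 'n) \<Rightarrow> 'i \<Rightarrow> int ^ 'n" where
  "tildeY dot iY i = dd dot i *s iY i"

definition Xplus :: "'i set \<Rightarrow> ('i \<Rightarrow> int ^ 'n) \<Rightarrow> (int ^ 'n) set" where
  "Xplus I iY = {x. \<forall>i\<in>I. pairing (iY i) x \<ge> 0}"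

definition enhancer :: "'i set \<Rightarrow> 'i set \<Rightarrow> ('i \<Rightarrow> 'i \<Rightarrow> int) \<Rightarrow> ('i \<Rightarrow> int ^ 'n)
    \<Rightarrow> (('i \<Rightarrow> int) \<Rightarrow> int ^ 'n \<Rightarrow> int) \<Rightarrow> bool" where
  "enhancer I I1 dot iX \<phi> \<longleftrightarrow>
     (\<forall>\<nu>\<in>ZI I. \<forall>\<mu>\<in>ZI I. \<forall>x.
        \<phi> \<nu> (x + primeX I iX \<mu>) mod 4 = (\<phi> \<nu> (primeX I iX \<mu>) + \<phi> \<nu> x) mod 4 \<and>
        \<phi> (\<lambda>k. \<nu> k + \<mu> k) x mod 4 = (\<phi> \<nu> x + \<phi> \<mu> x) mod 4) \<and>
     (\<forall>i\<in>I. \<forall>j\<in>I. i \<noteq> j \<longrightarrow> even (\<phi> (basis i) (iX j))) \<and>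
     (\<forall>i\<in>I. \<forall>j\<in>I. i \<noteq> j \<longrightarrow>
        (\<phi> (basis i) (iX j) - \<phi> (basis j) (iX i)) mod 4
          = (dot i j + 2 * par I1 i * par I1 j) mod 4) \<and>
     (\<forall>i\<in>I. \<phi> (basis i) (iX i) mod 4 = dd dot i mod 4)"

end

theory Submission
  imports Defs
begin


lemma ZI_add: "a \<in> ZI I \<Longrightarrow> b \<in> ZI I \<Longrightarrow> (\<lambda>k. a k + b k) \<in> ZI I"
  by (simp add: ZI_def)
lemma ZI_basis: "i \<in> I \<Longrightarrow> basis i \<in> ZI I"
  by (auto simp: ZI_def basis_def)
lemma ZI_zero: "(\<lambda>k. 0) \<in> ZI I"
  by (simp add: ZI_def)

lemma primeX_add: "primeX I iX (\<lambda>k. a k + b k) = primeX I iX a + primeX I iX b"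
  by (simp add: primeX_def vector_sadd_rdistrib sum.distrib)
lemma primeX_zero: "primeX I iX (\<lambda>k. 0) = 0"
  by (simp add: primeX_def)
lemma primeX_basis: "finite I \<Longrightarrow> i \<in> I \<Longrightarrow> primeX I iX (basis i) = iX i"
  proof -
  assume "finite I" "i \<in> I"
  have "(\<Sum>j\<in>I. basis i j *s iX j) = (\<Sum>j\<in>I. if j = i then iX j else 0)"
    by (rule sum.cong) (auto simp: basis_def)
  then show ?thesis using \<open>finite I\<close> \<open>i \<in> I\<close> by (simp add: primeX_def)
qed

lemma primeX_inj:
  assumes "X_regular I iX" "a \<in> ZI I" "b \<in> ZI I" "primeX I iX a = primeX I iX b"
  shows "a = b"
proof
  fix k
  have "(\<Sum>i\<in>I. (a i - b i) *s iX i) = 0"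
    using assms(4) by (simp add: primeX_def vector_sub_rdistrib sum_subtractf)
  then have "\<forall>i\<in>I. a i - b i = 0" using assms(1) unfolding X_regular_def lin_indep_fam_def by (metis (no_types))
  then show "a k = b k" using assms(2,3) by (cases "k \<in> I") (auto simp: ZI_def)
qed

lemma pairing_add: "pairing y (a + b) = pairing y a + pairing y b"
  by (simp add: pairing_def distrib_left sum.distrib)
lemma pairing_diff: "pairing y (a - b) = pairing y a - pairing y b"
  by (simp add: pairing_def right_diff_distrib sum_subtractf)
lemma pairing_smult: "pairing (c *s y) x = c * pairing y x"
  by (simp add: pairing_def sum_distrib_left mult.assoc)
lemma pairing_primeX: "pairing y (primeX I iX \<nu>) = (\<Sum>j\<in>I. \<nu> j * pairing y (iX j))"
  unfolding pairing_def primeX_def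
  by (simp add: sum_distrib_left sum_distrib_right mult_ac sum.swap[of _ UNIV])

lemma dd2: "cartan_datum I I1 dot \<Longrightarrow> i \<in> I \<Longrightarrow> 2 * dd dot i = dot i i"
  by (auto simp: cartan_datum_def dd_def)

lemma dot_even:
  assumes c: "cartan_datum I I1 dot" and i: "i \<in> I" and j: "j \<in> I"
  shows "even (dot i j)"
proof (cases "i = j")
  case True then show ?thesis using c i by (auto simp: cartan_datum_def)
next
  case False
  have gen: "even (dot a b)" if a: "a \<in> I" and b: "b \<in> I" and ab: "a \<noteq> b"
     and h: "a \<in> I1 \<or> b \<notin> I1" for a b
  proof -
    have dv: "dot a a dvd 2 * dot a b" and pos: "dot a a > 0" and ev: "even (dot a a)"
      using c a b ab by (auto simp: cartan_datum_def)
    obtain m where m: "2 * dot a b = dot a a * m" using dv by blast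
    obtain e where e: "dot a a = 2 * e" using ev by blast
    show ?thesis
    proof (cases "a \<in> I1")
      case True
      then have "even (2 * dot a b div dot a a)" using c a b ab by (auto simp: cartan_datum_def)
      then have "even m" using m pos by simp
      then show ?thesis using m e by auto
    next
      case False
      then have "b \<notin> I1" using h by blast
      have "dd dot a mod 2 = 0" using c a False by (auto simp: cartan_datum_def par_def)
      then have "even e" using e by (simp add: dd_def even_iff_mod_2_eq_zero)
      then show ?thesis using m e by auto
    qed
  qed
  show ?thesis
  proof (cases "i \<in> I1 \<or> j \<notin> I1")
    case True then show ?thesis using gen i j False by blast
  next
    case False
    then have "even (dot j i)" using gen i j \<open>i \<noteq> j\<close> by blast
    then show ?thesis using c i j by (auto simp: cartan_datum_def)
  qed
qed

lemma pair_tilde: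
  assumes "cartan_datum I I1 dot" "root_datum I dot iY iX" "i \<in> I" "j \<in> I"
  shows "pairing (tildeY dot iY i) (iX j) = dot i j"
proof -
  have "pairing (iY i) (iX j) * dot i i = 2 * dot i j" using assms by (auto simp: root_datum_def)
  then have "2 * (dd dot i * pairing (iY i) (iX j)) = 2 * dot i j"
    using dd2[OF assms(1,3)] by (metis mult.assoc mult.commute)
  then show ?thesis by (simp add: tildeY_def pairing_smult)
qed



lemma lin4:
  fixes g :: "('i \<Rightarrow> int) \<Rightarrow> int"
  assumes fin: "finite I"
    and add: "\<And>a b. a \<in> ZI I \<Longrightarrow> b \<in> ZI I \<Longrightarrow> (4::int) dvd (g (\<lambda>k. a k + b k) - (g a + g b))"
    and nu: "\<nu> \<in> ZI I"
  shows "(4::int) dvd (g \<nu> - (\<Sum>j\<in>I. \<nu> j * g (basis j)))"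
proof -
  have g0: "(4::int) dvd g (\<lambda>k. 0)"
    using add[OF ZI_zero ZI_zero] by simp
  have sc: "(4::int) dvd (g (\<lambda>k. c * basis j k) - c * g (basis j))" if j: "j \<in> I" for j c
  proof (induct c rule: int_induct[where k=0])
    case base then show ?case using g0 by simp
  next
    case (step1 c)
    have Z: "(\<lambda>k. c * basis j k) \<in> ZI I" using j by (auto simp: ZI_def basis_def)
    have e: "(\<lambda>k. (c + 1) * basis j k) = (\<lambda>k. c * basis j k + basis j k)" by (simp add: algebra_simps)
    have "(4::int) dvd (g (\<lambda>k. c * basis j k + basis j k) - (g (\<lambda>k. c * basis j k) + g (basis j)))"
      using add[OF Z ZI_basis[OF j]] .
    from dvd_add[OF this step1(2)] show ?case unfolding e by (simp add: algebra_simps)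
  next
    case (step2 c)
    have Z: "(\<lambda>k. (c - 1) * basis j k) \<in> ZI I" using j by (auto simp: ZI_def basis_def)
    have e: "(\<lambda>k. c * basis j k) = (\<lambda>k. (c - 1) * basis j k + basis j k)" by (simp add: algebra_simps)
    have "(4::int) dvd (g (\<lambda>k. (c - 1) * basis j k + basis j k) - (g (\<lambda>k. (c - 1) * basis j k) + g (basis j)))"
      using add[OF Z ZI_basis[OF j]] .
    from dvd_diff[OF step2(2) this] show ?case unfolding e by (simp add: algebra_simps)
  qed
  have main: "finite S \<Longrightarrow> S \<subseteq> I \<Longrightarrow> (4::int) dvd (g (\<lambda>k. \<Sum>j\<in>S. \<nu> j * basis j k) - (\<Sum>j\<in>S. \<nu> j * g (basis j)))" for S
  proof (induct S rule: finite_induct)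
    case empty then show ?case using g0 by simp
  next
    case (insert x F)
    have j: "x \<in> I" and F: "F \<subseteq> I" using insert by auto
    have Z1: "(\<lambda>k. \<Sum>j\<in>F. \<nu> j * basis j k) \<in> ZI I" using F unfolding ZI_def basis_def by (auto intro!: sum.neutral)
    have Z2: "(\<lambda>k. \<nu> x * basis x k) \<in> ZI I" using j by (auto simp: ZI_def basis_def)
    have e: "(\<lambda>k. \<Sum>j\<in>insert x F. \<nu> j * basis j k) = (\<lambda>k. (\<Sum>j\<in>F. \<nu> j * basis j k) + \<nu> x * basis x k)"
      using insert by (simp add: add.commute)
    have "4 dvd (g (\<lambda>k. (\<Sum>j\<in>F. \<nu> j * basis j k) + \<nu> x * basis x k) - (g (\<lambda>k. \<Sum>j\<in>F. \<nu> j * basis j k) + g (\<lambda>k. \<nu> x * basis x k)))"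
      using add[OF Z1 Z2] .
    from dvd_add[OF dvd_add[OF this insert(3)[OF F]] sc[OF j, of "\<nu> x"]]
    show ?case unfolding e using insert by (simp add: algebra_simps)
  qed
  have "(\<lambda>k. \<Sum>j\<in>I. \<nu> j * basis j k) = \<nu>"
  proof
    fix k
    show "(\<Sum>j\<in>I. \<nu> j * basis j k) = \<nu> k"
    proof -
      have "(\<Sum>j\<in>I. \<nu> j * basis j k) = (\<Sum>j\<in>I. if k = j then \<nu> k else 0)"
        by (rule sum.cong) (auto simp: basis_def)
      then show ?thesis using fin nu by (cases "k \<in> I") (auto simp: ZI_def)
    qed
  qed
  then show ?thesis using main[OF fin] by simp
qed



lemma sum_basis: "finite I \<Longrightarrow> i \<in> I \<Longrightarrow> (\<Sum>j\<in>I. basis i j * f j) = f i"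
proof -
  assume a: "finite I" "i \<in> I"
  have "(\<Sum>j\<in>I. basis i j * f j) = (\<Sum>j\<in>I. if i = j then f j else 0)"
    by (rule sum.cong) (auto simp: basis_def)
  then show ?thesis using a by simp
qed

lemma Qdiff:
  fixes h :: "'i \<Rightarrow> 'i \<Rightarrow> int"
  assumes fin: "finite I" and i: "i \<in> I" and sym: "\<And>j k. j \<in> I \<Longrightarrow> k \<in> I \<Longrightarrow> h j k = h k j"
  shows "(\<Sum>j\<in>I. \<Sum>k\<in>I. (\<mu> j + basis i j) * (\<mu> k + basis i k) * h j k)
       = (\<Sum>j\<in>I. \<Sum>k\<in>I. \<mu> j * \<mu> k * h j k) + 2 * (\<Sum>k\<in>I. \<mu> k * h i k) + h i i"
proof -
  have e: "(\<mu> j + basis i j) * (\<mu> k + basis i k) * h j k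
     = \<mu> j * \<mu> k * h j k + (basis i j * (\<mu> k * h j k)) + (basis i k * (\<mu> j * h j k)) + basis i j * (basis i k * h j k)" for j k
    by (simp add: algebra_simps)
  have s1: "(\<Sum>j\<in>I. \<Sum>k\<in>I. basis i j * (\<mu> k * h j k)) = (\<Sum>k\<in>I. \<mu> k * h i k)"
    by (simp add: sum_distrib_left[symmetric] sum_basis fin i)
  have s2: "(\<Sum>j\<in>I. \<Sum>k\<in>I. basis i k * (\<mu> j * h j k)) = (\<Sum>k\<in>I. \<mu> k * h i k)"
    using sym i by (simp add: sum_distrib_left[symmetric] sum_basis fin i)
  have s3: "(\<Sum>j\<in>I. \<Sum>k\<in>I. basis i j * (basis i k * h j k)) = h i i"
    by (simp add: sum_distrib_left[symmetric] sum_basis fin i)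
  show ?thesis unfolding e sum.distrib s1 s2 s3 by simp
qed



lemma enh_E1:
  assumes "enhancer I I1 dot iX \<phi>" "\<nu> \<in> ZI I" "\<mu> \<in> ZI I"
  shows "(4::int) dvd (\<phi> \<nu> (x + primeX I iX \<mu>) - (\<phi> \<nu> (primeX I iX \<mu>) + \<phi> \<nu> x))"
  using assms unfolding enhancer_def by (simp add: mod_eq_dvd_iff)

lemma enh_E2:
  assumes "enhancer I I1 dot iX \<phi>" "\<nu> \<in> ZI I" "\<mu> \<in> ZI I"
  shows "(4::int) dvd (\<phi> (\<lambda>k. \<nu> k + \<mu> k) x - (\<phi> \<nu> x + \<phi> \<mu> x))"
  using assms unfolding enhancer_def by (simp add: mod_eq_dvd_iff)

lemma enh_E3:
  assumes c: "cartan_datum I I1 dot" and e: "enhancer I I1 dot iX \<phi>" and i: "i \<in> I" and j: "j \<in> I"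
  shows "(4::int) dvd (\<phi> (basis i) (iX j) - \<phi> (basis j) (iX i) - (dot i j + 2 * par I1 i * par I1 j))"
proof (cases "i = j")
  case False then show ?thesis using e i j unfolding enhancer_def
    by (auto simp: mod_eq_dvd_iff algebra_simps)
next
  case True
  have "dd dot i mod 2 = par I1 i" using c i by (auto simp: cartan_datum_def)
  moreover have "2 * dd dot i = dot i i" using dd2[OF c i] .
  moreover have "par I1 i * par I1 i = par I1 i" by (simp add: par_def)
  ultimately have "dot i i + 2 * par I1 i * par I1 i = 2 * (dd dot i + dd dot i mod 2)" by (simp add: mult.assoc)
  moreover have "even (dd dot i + dd dot i mod 2)" by presburger
  then obtain m where "dd dot i + dd dot i mod 2 = 2 * m" by blast
  ultimately have "dot i i + 2 * par I1 i * par I1 i = 4 * m" by simp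
  then have "4 dvd (dot i i + 2 * par I1 i * par I1 i)" by simp
  moreover have "\<phi> (basis i) (iX j) - \<phi> (basis j) (iX i) - (dot i j + 2 * par I1 i * par I1 j)
     = - (dot i i + 2 * par I1 i * par I1 i)" using True by simp
  ultimately show ?thesis by (simp only: dvd_minus_iff)
qed

lemma keyK:
  assumes c: "cartan_datum I I1 dot" and e: "enhancer I I1 dot iX \<phi>" and i: "i \<in> I" and nu: "\<nu> \<in> ZI I"
  shows "(4::int) dvd (\<phi> (basis i) (primeX I iX \<nu>) - \<phi> \<nu> (iX i)
           - (\<Sum>j\<in>I. \<nu> j * dot i j) - 2 * parZ I I1 \<nu> * par I1 i)"
proof -
  have fin: "finite I" using c by (simp add: cartan_datum_def)
  have l1: "(4::int) dvd (\<phi> (basis i) (primeX I iX \<nu>) - (\<Sum>j\<in>I. \<nu> j * \<phi> (basis i) (primeX I iX (basis j))))"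
  proof (rule lin4[OF fin _ nu, where g="\<lambda>\<nu>. \<phi> (basis i) (primeX I iX \<nu>)", simplified])
    fix a b assume a: "a \<in> ZI I" and b: "b \<in> ZI I"
    show "4 dvd \<phi> (basis i) (primeX I iX (\<lambda>k. a k + b k)) - (\<phi> (basis i) (primeX I iX a) + \<phi> (basis i) (primeX I iX b))"
      using enh_E1[OF e ZI_basis[OF i] b, of "primeX I iX a"] by (simp add: primeX_add algebra_simps)
  qed
  have l2: "(4::int) dvd (\<phi> \<nu> (iX i) - (\<Sum>j\<in>I. \<nu> j * \<phi> (basis j) (iX i)))"
    by (rule lin4[OF fin _ nu, where g="\<lambda>\<nu>. \<phi> \<nu> (iX i)", simplified]) (rule enh_E2[OF e])
  have l1': "(\<Sum>j\<in>I. \<nu> j * \<phi> (basis i) (primeX I iX (basis j))) = (\<Sum>j\<in>I. \<nu> j * \<phi> (basis i) (iX j))"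
    by (rule sum.cong) (auto simp: primeX_basis[OF fin])
  have l3: "(4::int) dvd (\<Sum>j\<in>I. \<nu> j * (\<phi> (basis i) (iX j) - \<phi> (basis j) (iX i) - (dot i j + 2 * par I1 i * par I1 j)))"
    by (rule dvd_sum) (simp add: enh_E3[OF c e i])
  define S where "S = (\<Sum>k\<in>I. \<nu> k * par I1 k)"
  have l4: "(\<Sum>j\<in>I. \<nu> j * (\<phi> (basis i) (iX j) - \<phi> (basis j) (iX i) - (dot i j + 2 * par I1 i * par I1 j)))
     = (\<Sum>j\<in>I. \<nu> j * \<phi> (basis i) (iX j)) - (\<Sum>j\<in>I. \<nu> j * \<phi> (basis j) (iX i)) - (\<Sum>j\<in>I. \<nu> j * dot i j) - 2 * par I1 i * S"
    unfolding S_def by (simp add: algebra_simps sum_subtractf sum.distrib sum_distrib_left)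
  have l5: "(4::int) dvd (2 * par I1 i * S - 2 * (S mod 2) * par I1 i)"
  proof -
    have "S - S mod 2 = 2 * (S div 2)" by (simp add: minus_mod_eq_mult_div)
    have "2 * par I1 i * S - 2 * (S mod 2) * par I1 i = 2 * par I1 i * (S - S mod 2)" by (simp add: algebra_simps)
    also have "\<dots> = 4 * (par I1 i * (S div 2))" unfolding \<open>S - S mod 2 = 2 * (S div 2)\<close> by simp
    finally have "2 * par I1 i * S - 2 * (S mod 2) * par I1 i = 4 * (par I1 i * (S div 2))" .
    then show ?thesis by simp
  qed
  have "(4::int) dvd ((\<phi> (basis i) (primeX I iX \<nu>) - (\<Sum>j\<in>I. \<nu> j * \<phi> (basis i) (iX j)))
      - (\<phi> \<nu> (iX i) - (\<Sum>j\<in>I. \<nu> j * \<phi> (basis j) (iX i)))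
      + (\<Sum>j\<in>I. \<nu> j * (\<phi> (basis i) (iX j) - \<phi> (basis j) (iX i) - (dot i j + 2 * par I1 i * par I1 j)))
      + (2 * par I1 i * S - 2 * (S mod 2) * par I1 i))"
    using dvd_add[OF dvd_add[OF dvd_diff[OF l1[unfolded l1'] l2] l3] l5] .
  then show ?thesis unfolding l4 by (simp add: parZ_def S_def[symmetric] algebra_simps)
qed



theorem mainTheorem19:
  fixes I I1 :: "'i set" and dot :: "'i \<Rightarrow> 'i \<Rightarrow> int"
    and iY iX :: "'i \<Rightarrow> int ^ 'n::finite"
    and \<phi> :: "('i \<Rightarrow> int) \<Rightarrow> int ^ 'n \<Rightarrow> int"
    and lam lam' :: "int ^ 'n"
  assumes "cartan_datum I I1 dot"
    and "root_datum I dot iY iX"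
    and "X_regular I iX"
    and "enhancer I I1 dot iX \<phi>"
    and "lam \<in> Xplus I iY" and "lam' \<in> Xplus I iY"
  shows "\<exists>\<kappa> :: int ^ 'n \<Rightarrow> int ^ 'n \<Rightarrow> int.
    (\<forall>i\<in>I. \<forall>\<nu>\<in>NI I. \<forall>\<mu>\<in>NI I.
       let \<zeta> = lam - primeX I iX \<nu>; \<zeta>' = primeX I iX \<mu> - lam' in
       \<kappa> (\<zeta> - iX i) \<zeta>' mod 4 = (\<kappa> \<zeta> \<zeta>' - \<phi> (basis i) \<zeta>') mod 4 \<and>
       \<kappa> \<zeta> (\<zeta>' + iX i) mod 4
         = (\<kappa> \<zeta> \<zeta>' + \<phi> (basis i) \<zeta> + 2 * dd dot i + pairing (tildeY dot iY i) (\<zeta> + \<zeta>')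
            + 2 * parZ I I1 \<nu> * par I1 i) mod 4) \<and>
    \<kappa> lam (- lam') mod 4 = 0"
proof -
  note c = assms(1) and r = assms(2) and xr = assms(3) and e = assms(4)
  have fin: "finite I" using c by (simp add: cartan_datum_def)
  let ?p = "primeX I iX"
  define h where "h j k = dot j k div 2" for j k
  define L where "L j = dd dot j + pairing (tildeY dot iY j) (lam - lam')" for j
  define Q where "Q \<mu> = (\<Sum>j\<in>I. \<Sum>k\<in>I. \<mu> j * \<mu> k * h j k) + (\<Sum>j\<in>I. \<mu> j * L j)" for \<mu> :: "'i \<Rightarrow> int"
  define F where "F \<nu> \<mu> = - \<phi> \<nu> (?p \<mu> - lam') + \<phi> \<mu> lam + Q \<mu>" for \<nu> \<mu>
  define N where "N \<zeta> = (SOME \<nu>. \<nu> \<in> ZI I \<and> \<zeta> = lam - ?p \<nu>)" for \<zeta>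
  define M where "M \<zeta>' = (SOME \<mu>. \<mu> \<in> ZI I \<and> \<zeta>' = ?p \<mu> - lam')" for \<zeta>'
  have N: "N (lam - ?p \<nu>) = \<nu>" if "\<nu> \<in> ZI I" for \<nu>
    unfolding N_def by (rule some_equality) (use that primeX_inj[OF xr] in auto)
  have M: "M (?p \<mu> - lam') = \<mu>" if "\<mu> \<in> ZI I" for \<mu>
    unfolding M_def by (rule some_equality) (use that primeX_inj[OF xr] in auto)
  have hsym: "h j k = h k j" if "j \<in> I" "k \<in> I" for j k
    using c that by (simp add: h_def cartan_datum_def)
  have h2: "2 * h j k = dot j k" if "j \<in> I" "k \<in> I" for j k
    using dot_even[OF c that] by (simp add: h_def)
  have hdd: "h j j = dd dot j" for j by (simp add: h_def dd_def)
  have QD: "Q (\<lambda>k. \<mu> k + basis i k) = Q \<mu> + (\<Sum>k\<in>I. \<mu> k * dot i k) + 2 * dd dot i + pairing (tildeY dot iY i) (lam - lam')"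
    if i: "i \<in> I" for \<mu> i
  proof -
    have q1: "(\<Sum>j\<in>I. \<Sum>k\<in>I. (\<mu> j + basis i j) * (\<mu> k + basis i k) * h j k)
       = (\<Sum>j\<in>I. \<Sum>k\<in>I. \<mu> j * \<mu> k * h j k) + 2 * (\<Sum>k\<in>I. \<mu> k * h i k) + h i i"
      by (rule Qdiff[OF fin i hsym])
    have q2: "2 * (\<Sum>k\<in>I. \<mu> k * h i k) = (\<Sum>k\<in>I. \<mu> k * dot i k)"
      by (simp add: sum_distrib_left) (rule sum.cong, auto simp: h2[OF i, symmetric] algebra_simps)
    have q3: "(\<Sum>j\<in>I. (\<mu> j + basis i j) * L j) = (\<Sum>j\<in>I. \<mu> j * L j) + L i"
      by (simp add: distrib_right sum.distrib sum_basis fin i)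
    show ?thesis unfolding Q_def q1 q2[symmetric] hdd using q3 unfolding L_def by simp
  qed
  have PT: "pairing (tildeY dot iY i) (?p \<nu>) = (\<Sum>j\<in>I. \<nu> j * dot i j)" if i: "i \<in> I" for i \<nu>
    unfolding pairing_primeX by (rule sum.cong) (auto simp: pair_tilde[OF c r i])
  have ev2: "(4::int) dvd 2 * (\<Sum>j\<in>I. \<nu> j * dot i j)" if i: "i \<in> I" for i \<nu>
  proof -
    have "even (\<Sum>j\<in>I. \<nu> j * dot i j)" by (rule dvd_sum) (use dot_even[OF c i] in auto)
    then show ?thesis by auto
  qed
  have NIZ: "\<nu> \<in> NI I \<Longrightarrow> \<nu> \<in> ZI I" for \<nu> by (simp add: NI_def)
  show ?thesis
  proof (rule exI[of _ "\<lambda>\<zeta> \<zeta>'. F (N \<zeta>) (M \<zeta>')"], intro conjI ballI)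
    fix i \<nu> \<mu> assume i: "i \<in> I" and nu: "\<nu> \<in> NI I" and mu: "\<mu> \<in> NI I"
    have nu: "\<nu> \<in> ZI I" and mu: "\<mu> \<in> ZI I" using nu mu by (auto simp: NI_def)
    have b: "basis i \<in> ZI I" by (rule ZI_basis[OF i])
    have nb: "(\<lambda>k. \<nu> k + basis i k) \<in> ZI I" and mb: "(\<lambda>k. \<mu> k + basis i k) \<in> ZI I"
      using ZI_add[OF nu b] ZI_add[OF mu b] .
    have e1: "lam - ?p \<nu> - iX i = lam - ?p (\<lambda>k. \<nu> k + basis i k)"
      by (simp add: primeX_add primeX_basis[OF fin i] algebra_simps)
    have e2: "?p \<mu> - lam' + iX i = ?p (\<lambda>k. \<mu> k + basis i k) - lam'"
      by (simp add: primeX_add primeX_basis[OF fin i] algebra_simps)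
    have G1: "F (\<lambda>k. \<nu> k + basis i k) \<mu> mod 4 = (F \<nu> \<mu> - \<phi> (basis i) (?p \<mu> - lam')) mod 4"
    proof -
      have "(4::int) dvd (\<phi> (\<lambda>k. \<nu> k + basis i k) (?p \<mu> - lam') - (\<phi> \<nu> (?p \<mu> - lam') + \<phi> (basis i) (?p \<mu> - lam')))"
        by (rule enh_E2[OF e nu b])
      then have "(4::int) dvd - (\<phi> (\<lambda>k. \<nu> k + basis i k) (?p \<mu> - lam') - (\<phi> \<nu> (?p \<mu> - lam') + \<phi> (basis i) (?p \<mu> - lam')))"
        by (simp only: dvd_minus_iff)
      then show ?thesis by (simp add: mod_eq_dvd_iff F_def algebra_simps)
    qed
    have G2: "F \<nu> (\<lambda>k. \<mu> k + basis i k) mod 4 = (F \<nu> \<mu> + \<phi> (basis i) (lam - ?p \<nu>) + 2 * dd dot i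
       + pairing (tildeY dot iY i) (lam - ?p \<nu> + (?p \<mu> - lam')) + 2 * parZ I I1 \<nu> * par I1 i) mod 4"
    proof -
      have A: "(4::int) dvd (\<phi> \<nu> ((?p \<mu> - lam') + ?p (basis i)) - (\<phi> \<nu> (?p (basis i)) + \<phi> \<nu> (?p \<mu> - lam')))"
        by (rule enh_E1[OF e nu b])
      have A': "(4::int) dvd - (\<phi> \<nu> ((?p \<mu> - lam') + ?p (basis i)) - (\<phi> \<nu> (?p (basis i)) + \<phi> \<nu> (?p \<mu> - lam')))"
        using A by (simp only: dvd_minus_iff)
      have B: "(4::int) dvd (\<phi> (\<lambda>k. \<mu> k + basis i k) lam - (\<phi> \<mu> lam + \<phi> (basis i) lam))"
        by (rule enh_E2[OF e mu b])
      have D: "(4::int) dvd (\<phi> (basis i) ((lam - ?p \<nu>) + ?p \<nu>) - (\<phi> (basis i) (?p \<nu>) + \<phi> (basis i) (lam - ?p \<nu>)))"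
        by (rule enh_E1[OF e b nu])
      have K: "(4::int) dvd (\<phi> (basis i) (?p \<nu>) - \<phi> \<nu> (iX i) - (\<Sum>j\<in>I. \<nu> j * dot i j) - 2 * parZ I I1 \<nu> * par I1 i)"
        by (rule keyK[OF c e i nu])
      have P: "pairing (tildeY dot iY i) (lam - ?p \<nu> + (?p \<mu> - lam'))
          = pairing (tildeY dot iY i) (lam - lam') + (\<Sum>j\<in>I. \<mu> j * dot i j) - (\<Sum>j\<in>I. \<nu> j * dot i j)"
      proof -
        have "lam - ?p \<nu> + (?p \<mu> - lam') = (lam - lam') + ?p \<mu> - ?p \<nu>" by (simp add: algebra_simps)
        then show ?thesis by (simp add: pairing_add pairing_diff PT[OF i])
      qed
      have pb: "?p (basis i) = iX i" by (rule primeX_basis[OF fin i])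
      have sumc: "(\<Sum>k\<in>I. \<mu> k * dot i k) = (\<Sum>j\<in>I. \<mu> j * dot i j)" by simp
      have X: "(4::int) dvd ((- (\<phi> \<nu> ((?p \<mu> - lam') + ?p (basis i)) - (\<phi> \<nu> (?p (basis i)) + \<phi> \<nu> (?p \<mu> - lam'))))
          + (\<phi> (\<lambda>k. \<mu> k + basis i k) lam - (\<phi> \<mu> lam + \<phi> (basis i) lam))
          + (\<phi> (basis i) ((lam - ?p \<nu>) + ?p \<nu>) - (\<phi> (basis i) (?p \<nu>) + \<phi> (basis i) (lam - ?p \<nu>)))
          + (\<phi> (basis i) (?p \<nu>) - \<phi> \<nu> (iX i) - (\<Sum>j\<in>I. \<nu> j * dot i j) - 2 * parZ I I1 \<nu> * par I1 i)
          + 2 * (\<Sum>j\<in>I. \<nu> j * dot i j))"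
        using dvd_add[OF dvd_add[OF dvd_add[OF dvd_add[OF A' B] D] K] ev2[OF i]] .
      have eq: "F \<nu> (\<lambda>k. \<mu> k + basis i k) - (F \<nu> \<mu> + \<phi> (basis i) (lam - ?p \<nu>) + 2 * dd dot i
       + pairing (tildeY dot iY i) (lam - ?p \<nu> + (?p \<mu> - lam')) + 2 * parZ I I1 \<nu> * par I1 i)
        = ((- (\<phi> \<nu> ((?p \<mu> - lam') + ?p (basis i)) - (\<phi> \<nu> (?p (basis i)) + \<phi> \<nu> (?p \<mu> - lam'))))
          + (\<phi> (\<lambda>k. \<mu> k + basis i k) lam - (\<phi> \<mu> lam + \<phi> (basis i) lam))
          + (\<phi> (basis i) ((lam - ?p \<nu>) + ?p \<nu>) - (\<phi> (basis i) (?p \<nu>) + \<phi> (basis i) (lam - ?p \<nu>)))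
          + (\<phi> (basis i) (?p \<nu>) - \<phi> \<nu> (iX i) - (\<Sum>j\<in>I. \<nu> j * dot i j) - 2 * parZ I I1 \<nu> * par I1 i)
          + 2 * (\<Sum>j\<in>I. \<nu> j * dot i j))"
        unfolding F_def QD[OF i] P primeX_add pb by (simp add: algebra_simps)
      show ?thesis
        unfolding mod_eq_dvd_iff eq using X .
    qed
    show "let \<zeta> = lam - ?p \<nu>; \<zeta>' = ?p \<mu> - lam' in
       F (N (\<zeta> - iX i)) (M \<zeta>') mod 4 = (F (N \<zeta>) (M \<zeta>') - \<phi> (basis i) \<zeta>') mod 4 \<and>
       F (N \<zeta>) (M (\<zeta>' + iX i)) mod 4
         = (F (N \<zeta>) (M \<zeta>') + \<phi> (basis i) \<zeta> + 2 * dd dot i + pairing (tildeY dot iY i) (\<zeta> + \<zeta>')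
            + 2 * parZ I I1 \<nu> * par I1 i) mod 4"
      unfolding Let_def e1 e2 N[OF nu] M[OF mu] N[OF nb] M[OF mb] using G1 G2 by simp
  next
    have n0: "lam = lam - ?p (\<lambda>k. 0)" and m0: "- lam' = ?p (\<lambda>k. 0) - lam'" by (simp_all add: primeX_zero)
    have z: "4 dvd \<phi> (\<lambda>k. 0) x" for x using enh_E2[OF e ZI_zero ZI_zero, of x] by simp
    show "F (N lam) (M (- lam')) mod 4 = 0"
      apply (subst n0, subst m0)
      unfolding N[OF ZI_zero] M[OF ZI_zero] F_def Q_def
      using z[of "?p (\<lambda>k. 0) - lam'"] z[of lam] by simp
  qed
qed


end
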